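(* (i) If $r+s=0$, then $a^*_i=\frac{d-r}{2}$ for $0\le i\le d-1$ and $a^*_d=\frac{d(r+1)}{2}$. (ii) If $r-s=0$, then $a^*_i=\frac d2$ for $0\le i\le d$.
   Context: Fix an integer $d\ge0$ and $r,s\in(-1,\infty)$. Write $(x)_i=x(x+1)\cdots(x+i-1)$, $(x)_0=1$. For $0\le i\le d$ put $\theta^*_i=i$. Put $b^*_i=\frac{(d-i)(i-d-s)(2d-2i+r+s+2)_i}{(2d-2i+r+s)_{i+1}}$ ($0\le i\le d-1$), $c^*_i=\frac{i(i-d-r-1)(d-i+r+s+1)_{d-i}}{(d-i+r+s+2)_{d-i+1}}$ ($1\le i\le d$), $b^*_d=c^*_0=0$, and $a^*_i=\theta^*_0-b^*_i-c^*_i$ for $0\le i\le d$. *)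

theory Defs
  imports Complex_Main
begin

text \<open>Rising factorial (x)_i is the library's pochhammer x i.\<close>

definition thetastar :: "nat \<Rightarrow> real" where
  "thetastar i = real i"

definition bstar :: "nat \<Rightarrow> real \<Rightarrow> real \<Rightarrow> nat \<Rightarrow> real" where
  "bstar d r s i = (if i < d then
     (real d - real i) * (real i - real d - s) * pochhammer (2 * real d - 2 * real i + r + s + 2) i
       / pochhammer (2 * real d - 2 * real i + r + s) (i + 1)
   else 0)"

definition cstar :: "nat \<Rightarrow> real \<Rightarrow> real \<Rightarrow> nat \<Rightarrow> real" where
  "cstar d r s i = (if 1 \<le> i \<and> i \<le> d then
     real i * (real i - real d - r - 1) * pochhammer (real d - real i + r + s + 1) (d - i)
       / pochhammer (real d - real i + r + s + 2) (d - i + 1)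
   else 0)"

definition astar :: "nat \<Rightarrow> real \<Rightarrow> real \<Rightarrow> nat \<Rightarrow> real" where
  "astar d r s i = thetastar 0 - bstar d r s i - cstar d r s i"

end

theory Submission
  imports Defs
begin

lemma frac_help:
  fixes A B C D :: real
  assumes "B \<noteq> 0" "D \<noteq> 0" "D * A = B * C"
  shows "A / B = C / D"
  using assms by (simp add: frac_eq_eq mult.commute)

lemma poch_b:
  fixes x :: real assumes "x > 0"
  shows "pochhammer (x + 2) i / pochhammer x (i + 1) = (x + real i + 1) / (x * (x + 1))"
proof (rule frac_help)
  have p: "pochhammer x (i + 1) > 0" using assms by (intro pochhammer_pos) 
  then show "pochhammer x (i + 1) \<noteq> 0" by simp
  show "x * (x + 1) \<noteq> 0" using assms by simp
  have e1: "pochhammer x (Suc (Suc i)) = x * ((x + 1) * pochhammer (x + 2) i)"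
    by (simp add: pochhammer_rec add.assoc)
  have e2: "pochhammer x (Suc (Suc i)) = pochhammer x (i + 1) * (x + real i + 1)"
    by (simp add: pochhammer_Suc add.commute add.left_commute)
  from e1 e2 show "x * (x + 1) * pochhammer (x + 2) i = pochhammer x (i + 1) * (x + real i + 1)"
    by (simp add: mult.assoc)
qed

lemma poch_c:
  fixes y :: real assumes "y > 0"
  shows "pochhammer y n / pochhammer (y + 1) (n + 1) = y / ((y + real n) * (y + real n + 1))"
proof (rule frac_help)
  have p: "pochhammer (y + 1) n > 0" using assms by (intro pochhammer_pos) simp
  have yn: "y + real n > 0" using assms by simp
  have e1: "pochhammer y (Suc n) = y * pochhammer (y + 1) n"
    by (simp add: pochhammer_rec)
  have e2: "pochhammer y (Suc n) = pochhammer y n * (y + real n)"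
    by (simp add: pochhammer_Suc)
  have e3: "pochhammer (y + 1) (n + 1) = pochhammer (y + 1) n * (y + real n + 1)"
    by (simp add: pochhammer_Suc add.commute add.left_commute)
  show "pochhammer (y + 1) (n + 1) \<noteq> 0" using e3 p yn by simp
  show "(y + real n) * (y + real n + 1) \<noteq> 0" using yn by simp
  have "(y + real n) * (y + real n + 1) * pochhammer y n = (y + real n + 1) * (pochhammer y n * (y + real n))"
    by (simp add: algebra_simps)
  also have "\<dots> = (y + real n + 1) * (y * pochhammer (y + 1) n)" using e1 e2 by simp
  also have "\<dots> = pochhammer (y + 1) (n + 1) * y" using e3 by (simp add: algebra_simps)
  finally show "(y + real n) * (y + real n + 1) * pochhammer y n = pochhammer (y + 1) (n + 1) * y" .
qed

lemma bstar_eq: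
  assumes "i < d" and "2 * real d - 2 * real i + r + s > 0"
  shows "bstar d r s i = (real d - real i) * (real i - real d - s) *
     ((2 * real d - 2 * real i + r + s + real i + 1) / ((2 * real d - 2 * real i + r + s) * (2 * real d - 2 * real i + r + s + 1)))"
proof -
  have "bstar d r s i = (real d - real i) * (real i - real d - s) *
     (pochhammer (2 * real d - 2 * real i + r + s + 2) i / pochhammer (2 * real d - 2 * real i + r + s) (i + 1))"
    using assms(1) unfolding bstar_def by simp
  also note poch_b[OF assms(2)]
  finally show ?thesis .
qed

lemma cstar_eq:
  assumes "i \<le> d" and "real d - real i + r + s + 1 > 0"
  shows "cstar d r s i = real i * (real i - real d - r - 1) *
     ((real d - real i + r + s + 1) / ((real d - real i + r + s + 1 + real (d - i)) * (real d - real i + r + s + 1 + real (d - i) + 1)))"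
proof (cases "i = 0")
  case True then show ?thesis unfolding cstar_def by simp
next
  case False
  have "cstar d r s i = real i * (real i - real d - r - 1) *
     (pochhammer (real d - real i + r + s + 1) (d - i) / pochhammer (real d - real i + r + s + 1 + 1) (d - i + 1))"
    using assms(1) False unfolding cstar_def by (simp add: add.assoc)
  also note poch_c[OF assms(2)]
  finally show ?thesis .
qed

lemma B1: fixes n r I :: real assumes n: "n > 0" shows "n * (- n + r) * ((2 * n + I + 1) / ((2 * n) * (2 * n + 1))) = (r - n) * (2 * n + I + 1) / (2 * (2 * n + 1))"
proof -
  have "2 * n + 1 \<noteq> 0" "n \<noteq> 0" using n by simp_all
  then show ?thesis by (simp add: frac_eq_eq)
qed
lemma C1: fixes n r I :: real assumes n: "n > 0" shows "I * (- n - r - 1) * ((n + 1) / ((n + 1 + n) * (n + 1 + n + 1))) = I * (- n - r - 1) / (2 * (2 * n + 1))"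
proof -
  have a: "n + 1 + n = 2 * n + 1" "n + 1 + n + 1 = 2 * (n + 1)" by simp_all
  have "2 * n + 1 \<noteq> 0" "n + 1 \<noteq> 0" using n by simp_all
  then show ?thesis unfolding a by (simp add: frac_eq_eq) (simp add: algebra_simps)
qed
lemma E1: fixes n r I :: real assumes n: "n > 0" shows "0 - (r - n) * (2 * n + I + 1) / (2 * (2 * n + 1)) - I * (- n - r - 1) / (2 * (2 * n + 1)) = (I + n - r) / 2"
proof -
  have h: "2 * n + 1 \<noteq> 0" using n by simp_all
  have "0 - (r - n) * (2 * n + I + 1) / (2 * (2 * n + 1)) - I * (- n - r - 1) / (2 * (2 * n + 1))
     = (0 - (r - n) * (2 * n + I + 1) - I * (- n - r - 1)) / (2 * (2 * n + 1))"
    by (simp add: diff_divide_distrib)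
  also have "0 - (r - n) * (2 * n + I + 1) - I * (- n - r - 1) = (I + n - r) * (2 * n + 1)"
    by (simp add: algebra_simps)
  also have "(I + n - r) * (2 * n + 1) / (2 * (2 * n + 1)) = (I + n - r) / 2"
    using h by (metis mult.commute nonzero_mult_divide_mult_cancel_left)
  finally show ?thesis .
qed

lemma B2: fixes n r I :: real assumes n: "n + r > 0" shows "n * (- n - r) * ((2 * n + 2 * r + I + 1) / ((2 * n + 2 * r) * (2 * n + 2 * r + 1))) = - n * (2 * n + 2 * r + I + 1) / (2 * (2 * n + 2 * r + 1))"
  unfolding times_divide_eq_right
proof (rule frac_help)
  show "(2 * n + 2 * r) * (2 * n + 2 * r + 1) \<noteq> 0" using n by simp
  show "2 * (2 * n + 2 * r + 1) \<noteq> 0" using n by simp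
  show "2 * (2 * n + 2 * r + 1) * (n * (- n - r) * (2 * n + 2 * r + I + 1)) =
    (2 * n + 2 * r) * (2 * n + 2 * r + 1) * (- n * (2 * n + 2 * r + I + 1))"
    by (simp add: algebra_simps)
qed
lemma C2: fixes n r I :: real assumes n: "n + r + 1 > 0" "n + 2 * r + 1 > 0" "2 * n + 2 * r + 1 > 0" shows "I * (- n - r - 1) * ((n + 2 * r + 1) / ((n + 2 * r + 1 + n) * (n + 2 * r + 1 + n + 1))) = - I * (n + 2 * r + 1) / (2 * (2 * n + 2 * r + 1))"
  unfolding times_divide_eq_right
proof (rule frac_help)
  show "(n + 2 * r + 1 + n) * (n + 2 * r + 1 + n + 1) \<noteq> 0" using n by simp
  show "2 * (2 * n + 2 * r + 1) \<noteq> 0" using n by simp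
  show "2 * (2 * n + 2 * r + 1) * (I * (- n - r - 1) * (n + 2 * r + 1)) =
    (n + 2 * r + 1 + n) * (n + 2 * r + 1 + n + 1) * (- I * (n + 2 * r + 1))"
    by (simp add: algebra_simps)
qed
lemma E2: fixes n r I :: real assumes n: "2 * n + 2 * r + 1 > 0" shows "0 - - n * (2 * n + 2 * r + I + 1) / (2 * (2 * n + 2 * r + 1)) - - I * (n + 2 * r + 1) / (2 * (2 * n + 2 * r + 1)) = (I + n) / 2"
proof -
  have h: "2 * n + 2 * r + 1 \<noteq> 0" using n by simp_all
  have "0 - - n * (2 * n + 2 * r + I + 1) / (2 * (2 * n + 2 * r + 1)) - - I * (n + 2 * r + 1) / (2 * (2 * n + 2 * r + 1))
     = (0 - - n * (2 * n + 2 * r + I + 1) - - I * (n + 2 * r + 1)) / (2 * (2 * n + 2 * r + 1))"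
    by (simp add: diff_divide_distrib add_divide_distrib)
  also have "0 - - n * (2 * n + 2 * r + I + 1) - - I * (n + 2 * r + 1) = (I + n) * (2 * n + 2 * r + 1)"
    by (simp add: algebra_simps)
  also have "(I + n) * (2 * n + 2 * r + 1) / (2 * (2 * n + 2 * r + 1)) = (I + n) / 2"
    using h by (metis mult.commute nonzero_mult_divide_mult_cancel_left)
  finally show ?thesis .
qed

theorem lemma2p7:
  fixes d :: nat and r s :: real
  assumes "r > -1" and "s > -1"
  shows "(r + s = 0 \<longrightarrow>
            (\<forall>i < d. astar d r s i = (real d - r) / 2) \<and>
            astar d r s d = real d * (r + 1) / 2)
       \<and> (r - s = 0 \<longrightarrow> (\<forall>i \<le> d. astar d r s i = real d / 2))"
proof (intro conjI impI allI)
  assume rs: "r + s = 0"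
  fix i assume i: "i < d"
  define n where "n = real d - real i"
  have n: "n > 0" using i unfolding n_def by simp
  have sr: "s = - r" using rs by simp
  have x: "2 * real d - 2 * real i + r + s = 2 * n" unfolding n_def sr by simp
  have y: "real d - real i + r + s + 1 = n + 1" unfolding n_def sr by simp
  have ri: "real (d - i) = n" using i unfolding n_def by simp
  have f1: "real i - real d - s = - n + r" unfolding n_def sr by simp
  have f2: "real i - real d - r - 1 = - n - r - 1" unfolding n_def by simp
  have dd: "real d = real i + n" unfolding n_def by simp
  have b: "bstar d r s i = (r - n) * (2 * n + real i + 1) / (2 * (2 * n + 1))"
    using bstar_eq[of i d r s] i n unfolding x f1 n_def[symmetric] B1[OF n] by simp
  have c: "cstar d r s i = real i * (- n - r - 1) / (2 * (2 * n + 1))"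
    using cstar_eq[of i d r s] i n unfolding y ri f2 C1[OF n] by simp
  show "astar d r s i = (real d - r) / 2"
    unfolding astar_def thetastar_def b c dd using E1[OF n, of r "real i"] by simp
next
  assume rs: "r + s = 0"
  show "astar d r s d = real d * (r + 1) / 2"
    unfolding astar_def thetastar_def bstar_def cstar_def using rs
    by (cases "d = 0") (auto simp: field_simps)
next
  assume rs: "r - s = 0"
  fix i assume i: "i \<le> d"
  show "astar d r s i = real d / 2"
  proof (cases "i < d")
    case True
    define n where "n = real d - real i"
    have n: "n \<ge> 1" using True unfolding n_def by simp
    have sr: "s = r" using rs by simp
    have x: "2 * real d - 2 * real i + r + s = 2 * n + 2 * r" unfolding n_def sr by simp
    have y: "real d - real i + r + s + 1 = n + 2 * r + 1" unfolding n_def sr by simp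
    have ri: "real (d - i) = n" using i unfolding n_def by simp
    have f1: "real i - real d - s = - n - r" unfolding n_def sr by simp
    have f2: "real i - real d - r - 1 = - n - r - 1" unfolding n_def by simp
    have dd: "real d = real i + n" unfolding n_def by simp
    have p1: "n + r > 0" "n + r + 1 > 0" "n + 2 * r + 1 > 0" "2 * n + 2 * r + 1 > 0" "2 * n + 2 * r > 0"
      using n assms(1) by simp_all
    have b: "bstar d r s i = - n * (2 * n + 2 * r + real i + 1) / (2 * (2 * n + 2 * r + 1))"
      using bstar_eq[of i d r s] True p1 unfolding x f1 n_def[symmetric] B2[OF p1(1)] by simp
    have c: "cstar d r s i = - real i * (n + 2 * r + 1) / (2 * (2 * n + 2 * r + 1))"
      using cstar_eq[of i d r s] i p1 unfolding y ri f2 C2[OF p1(2,3,4)] by simp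
    show ?thesis
      unfolding astar_def thetastar_def b c dd using E2[OF p1(4), of "real i"] by simp
  next
    case False
    then have "i = d" using i by simp
    then show ?thesis unfolding astar_def thetastar_def bstar_def cstar_def using rs assms
      by (cases "d = 0") (auto simp: field_simps)
  qed
qed

end
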